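(* Let $\mathbb{L}>0$, $\sigma>0$, and let $V,p\colon\mathbb{R}\to\mathbb{R}$ satisfy: (i) $V,p\in C^2(\mathbb{R})$, $V(0)=0$, $p(0)=0$, and $p$ is $\mathbb{L}$-periodic; (ii) $V'$ is globally Lipschitz on $\mathbb{R}$; (iii) there exist $\beta>0$ and $R\ge1$ such that $-\operatorname{sign}(x)V'(x)\le-\beta|x|$ for all $|x|\ge R$. For $\varepsilon>0$ define $$f_\varepsilon(x)=\int_0^x\exp\!\left(\frac1{\sigma^2}\left(V(z)+p\left(\frac z\varepsilon\right)\right)\right)\mathrm{d}z,\quad g_\varepsilon=f_\varepsilon^{-1},\quad m^\varepsilon(x)=\frac{1}{\sqrt{2\sigma^2}\,f_\varepsilon'(g_\varepsilon(x))},$$ $$b^\varepsilon(x)=-V'(x)-\frac1\varepsilon p'\!\left(\frac x\varepsilon\right),\qquad B^\varepsilon(x)=-\frac12b^\varepsilon(x)^2-\frac12(b^\varepsilon)'(x),$$ and, for $h>0$ and $x,y\in\mathbb{R}$, $$p^\varepsilon(h,x,y)=\frac{m^\varepsilon(y)}{\sqrt{2\pi h}}\left(\frac{m^\varepsilon(y)}{m^\varepsilon(x)}\right)^{1/2}\exp\!\left(-\frac1{2h}\left(\int_x^ym^\varepsilon(z)\,\mathrm{d}z\right)^2\right)\mathbb{E}\!\left[\exp\!\left(h\int_0^1B^\varepsilon(\mathscr N(h,g_\varepsilon(x),g_\varepsilon(y),u))\,\mathrm{d}u\right)\right],$$ where, for $a,b\in\mathbb{R}$, $(\mathscr N(h,a,b,u))_{u\in(0,1)}$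 is a jointly measurable process such that $\mathscr N(h,a,b,u)\sim\mathcal N(a+u(b-a),hu(1-u))$ for each $u\in(0,1)$. Then there exist constants $K_1,K_2>0$ independent of $\varepsilon$ such that for all $x,y\in\mathbb{R}$ and all sufficiently small $\varepsilon>0$ satisfying $K_1\varepsilon^4<\min\{2,1/(8\sigma^2)\}$, $$p^\varepsilon(\varepsilon^2,x,y)\le e^{\frac{K_2}2}\sqrt{\frac2{2-K_1\varepsilon^4}}\exp\!\left(2K_1\varepsilon^2g_\varepsilon(x)^2\right)\frac{m^\varepsilon(y)^{3/2}}{m^\varepsilon(x)^{1/2}}\frac1{\sqrt{2\pi\varepsilon^2}}\exp\!\left(-\frac{1-8K_1\sigma^2\varepsilon^4}{4\sigma^2\varepsilon^2}\left(g_\varepsilon(y)-g_\varepsilon(x)\right)^2\right).$$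
   Context: $p^\varepsilon(h,x,y)$ is (by a classical formula for one-dimensional diffusions) the transition probability density of the process $\xi^\varepsilon=f_\varepsilon(X^\varepsilon)$, where $X^\varepsilon$ solves $\mathrm{d}X_t^\varepsilon=-V'(X_t^\varepsilon)\mathrm{d}t-\frac1\varepsilon p'(X_t^\varepsilon/\varepsilon)\mathrm{d}t+\sqrt{2\sigma^2}\,\mathrm{d}W_t$; $\xi^\varepsilon$ satisfies $\mathrm{d}\xi_t^\varepsilon=\frac{1}{m^\varepsilon(\xi_t^\varepsilon)}\mathrm{d}W_t$. Note $f_\varepsilon'>0$, so $g_\varepsilon$ is well defined. *)

theory Defs
  imports "HOL-Probability.Probability"
begin

definition feps :: "real \<Rightarrow> (real \<Rightarrow> real) \<Rightarrow> (real \<Rightarrow> real) \<Rightarrow> real \<Rightarrow> real \<Rightarrow> real" where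
  "feps \<sigma> V p \<epsilon> x = (LBINT z=ereal 0..ereal x. exp ((V z + p (z / \<epsilon>)) / \<sigma>\<^sup>2))"

definition geps :: "real \<Rightarrow> (real \<Rightarrow> real) \<Rightarrow> (real \<Rightarrow> real) \<Rightarrow> real \<Rightarrow> real \<Rightarrow> real" where
  "geps \<sigma> V p \<epsilon> = inv (feps \<sigma> V p \<epsilon>)"

definition meps :: "real \<Rightarrow> (real \<Rightarrow> real) \<Rightarrow> (real \<Rightarrow> real) \<Rightarrow> real \<Rightarrow> real \<Rightarrow> real" where
  "meps \<sigma> V p \<epsilon> x = 1 / (sqrt (2 * \<sigma>\<^sup>2) * deriv (feps \<sigma> V p \<epsilon>) (geps \<sigma> V p \<epsilon> x))"

definition beps :: "(real \<Rightarrow> real) \<Rightarrow> (real \<Rightarrow> real) \<Rightarrow> real \<Rightarrow> real \<Rightarrow> real" where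
  "beps V p \<epsilon> x = - deriv V x - (1 / \<epsilon>) * deriv p (x / \<epsilon>)"

definition Beps :: "(real \<Rightarrow> real) \<Rightarrow> (real \<Rightarrow> real) \<Rightarrow> real \<Rightarrow> real \<Rightarrow> real" where
  "Beps V p \<epsilon> x = - (1/2) * (beps V p \<epsilon> x)\<^sup>2 - (1/2) * deriv (beps V p \<epsilon>) x"

definition peps :: "real \<Rightarrow> (real \<Rightarrow> real) \<Rightarrow> (real \<Rightarrow> real) \<Rightarrow> real \<Rightarrow> 'a measure
    \<Rightarrow> (real \<Rightarrow> real \<Rightarrow> real \<Rightarrow> real \<Rightarrow> 'a \<Rightarrow> real) \<Rightarrow> real \<Rightarrow> real \<Rightarrow> real \<Rightarrow> real" where
  "peps \<sigma> V p \<epsilon> M N h x y =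
     meps \<sigma> V p \<epsilon> y / sqrt (2 * pi * h)
     * sqrt (meps \<sigma> V p \<epsilon> y / meps \<sigma> V p \<epsilon> x)
     * exp (- (1 / (2 * h)) * (LBINT z=ereal x..ereal y. meps \<sigma> V p \<epsilon> z)\<^sup>2)
     * (\<integral>\<omega>. exp (h * (LBINT u=ereal 0..ereal 1.
            Beps V p \<epsilon> (N h (geps \<sigma> V p \<epsilon> x) (geps \<sigma> V p \<epsilon> y) u \<omega>))) \<partial>M)"

end

theory Submission
  imports Defs
begin

lemma FTC_at:
  fixes k :: "real \<Rightarrow> real"
  assumes "continuous_on UNIV k"
  shows "((\<lambda>x. LBINT z=ereal 0..ereal x. k z) has_field_derivative k x) (at x)"
proof -
  define d where "d = \<bar>x\<bar> + 1"
  have "((\<lambda>u. LBINT z=ereal 0..ereal u. k z) has_vector_derivative k x) (at x within {-d..d})"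
    by (rule interval_integral_FTC2) (use assms continuous_on_subset in \<open>auto simp: d_def\<close>)
  then have "((\<lambda>u. LBINT z=ereal 0..ereal u. k z) has_vector_derivative k x) (at x within {-d<..<d})"
    by (rule has_vector_derivative_within_subset) auto
  then have "((\<lambda>u. LBINT z=ereal 0..ereal u. k z) has_vector_derivative k x) (at x)"
    by (subst (asm) has_vector_derivative_within_open) (auto simp: d_def)
  then show ?thesis by (simp add: has_real_derivative_iff_has_vector_derivative)
qed

lemma periodic_int:
  fixes q :: "real \<Rightarrow> real"
  assumes "\<forall>x. q (x + L) = q x"
  shows "q (x + real_of_int n * L) = q x"
proof -
  have nat: "q (y + real m * L) = q y" for y m
  proof (induction m arbitrary: y)
    case (Suc m)
    have "q (y + real (Suc m) * L) = q ((y + L) + real m * L)" by (simp add: algebra_simps)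
    also have "\<dots> = q y" using Suc assms by simp
    finally show ?case .
  qed simp
  show ?thesis
  proof (cases "n \<ge> 0")
    case True
    then show ?thesis using nat[of x "nat n"] by simp
  next
    case False
    then show ?thesis using nat[of "x + real_of_int n * L" "nat (-n)"] by simp
  qed
qed

lemma periodic_bounded:
  fixes q :: "real \<Rightarrow> real"
  assumes L: "L > 0" and c: "continuous_on UNIV q" and per: "\<forall>x. q (x + L) = q x"
  shows "\<exists>B. \<forall>x. \<bar>q x\<bar> \<le> B"
proof -
  have "compact (q ` {0..L})"
    by (rule compact_continuous_image) (use c continuous_on_subset in auto)
  then have "bounded (q ` {0..L})" by (rule compact_imp_bounded)
  then obtain B where B: "\<forall>y\<in>{0..L}. \<bar>q y\<bar> \<le> B" by (auto simp: bounded_real)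
  have "\<bar>q x\<bar> \<le> B" for x
  proof -
    define n where "n = \<lfloor>x / L\<rfloor>"
    have "real_of_int n \<le> x / L" "x / L < real_of_int n + 1" unfolding n_def by linarith+
    then have "real_of_int n * L \<le> x" "x < real_of_int n * L + L"
      using L by (auto simp: field_simps)
    then have "x - real_of_int n * L \<in> {0..L}" by auto
    moreover have "q (x - real_of_int n * L) = q x"
      using periodic_int[OF per, of "x - real_of_int n * L" n] by simp
    ultimately show ?thesis using B by metis
  qed
  then show ?thesis by blast
qed

lemma deriv_periodic:
  fixes q :: "real \<Rightarrow> real"
  assumes d: "\<forall>x. q differentiable at x" and per: "\<forall>x. q (x + L) = q x"
  shows "\<forall>x. deriv q (x + L) = deriv q x"
proof
  fix x
  have "(q has_field_derivative deriv q (x + L)) (at (x + L))"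
    using d by (simp add: DERIV_deriv_iff_real_differentiable)
  then have "((\<lambda>t. q (t + L)) has_field_derivative deriv q (x + L)) (at x)"
    by (simp add: DERIV_shift)
  then have "(q has_field_derivative deriv q (x + L)) (at x)" using per by simp
  then show "deriv q (x + L) = deriv q x" by (simp add: DERIV_imp_deriv)
qed

lemma lipschitz_deriv_bound:
  fixes f :: "real \<Rightarrow> real"
  assumes l: "C-lipschitz_on UNIV f" and d: "(f has_field_derivative D) (at x)"
  shows "\<bar>D\<bar> \<le> C"
proof -
  have t: "((\<lambda>h. (f (x + h) - f x) / h) \<longlongrightarrow> D) (at 0)"
    using d by (simp add: DERIV_def)
  have t2: "((\<lambda>h. \<bar>(f (x + h) - f x) / h\<bar>) \<longlongrightarrow> \<bar>D\<bar>) (at 0)"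
    by (rule tendsto_rabs[OF t])
  have "\<bar>(f (x + h) - f x) / h\<bar> \<le> C" if "h \<noteq> 0" for h
  proof -
    have "\<bar>f (x + h) - f x\<bar> \<le> C * \<bar>h\<bar>"
      using lipschitz_onD[OF l, of "x + h" x] by (simp add: dist_real_def)
    then show ?thesis using that by (simp add: abs_divide divide_le_eq)
  qed
  then have "eventually (\<lambda>h. \<bar>(f (x + h) - f x) / h\<bar> \<le> C) (at 0)"
    by (auto simp: eventually_at_filter)
  then show ?thesis
    by (rule tendsto_upperbound[OF t2]) simp
qed

lemma LBINT01_le:
  fixes f :: "real \<Rightarrow> real"
  assumes le: "\<And>u. f u \<le> c" and c: "0 \<le> c"
  shows "(LBINT u=ereal 0..ereal 1. f u) \<le> c"
proof -
  have e: "(LBINT u=ereal 0..ereal 1. f u) = integral\<^sup>L lborel (\<lambda>x. indicator {0<..<1} x *\<^sub>R f x)"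
  proof -
    have "einterval (ereal 0) (ereal 1) = {0<..<1}" by (auto simp: einterval_def)
    then show ?thesis by (simp add: interval_lebesgue_integral_def set_lebesgue_integral_def)
  qed
  show ?thesis
  proof (cases "integrable lborel (\<lambda>x. indicator {0<..<1::real} x *\<^sub>R f x)")
    case True
    have i2: "integrable lborel (\<lambda>x. indicator {0<..<1::real} x *\<^sub>R c)"
      by (intro integrable_indicator) auto
    have "integral\<^sup>L lborel (\<lambda>x. indicator {0<..<1} x *\<^sub>R f x) \<le> integral\<^sup>L lborel (\<lambda>x. indicator {0<..<1::real} x *\<^sub>R c)"
      using True i2 by (intro integral_mono) (auto simp: indicator_def le)
    also have "\<dots> = c" by simp
    finally show ?thesis using e by simp
  next
    case False
    then show ?thesis using e c by (simp add: not_integrable_integral_eq)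
  qed
qed

lemma expect_le:
  fixes f :: "'a \<Rightarrow> real"
  assumes P: "prob_space M" and le: "\<And>w. f w \<le> c" and c: "0 \<le> c"
  shows "integral\<^sup>L M f \<le> c"
proof (cases "integrable M f")
  case True
  interpret prob_space M by (rule P)
  have "integral\<^sup>L M f \<le> integral\<^sup>L M (\<lambda>_. c)"
    using True by (intro integral_mono) (auto simp: le)
  also have "\<dots> = c" by (simp add: prob_space)
  finally show ?thesis .
next
  case False
  then show ?thesis using c by (simp add: not_integrable_integral_eq)
qed

lemma V_lower:
  fixes V :: "real \<Rightarrow> real"
  assumes d: "\<forall>x. V differentiable at x"
    and conf: "\<exists>\<beta>>0. \<exists>R\<ge>1. \<forall>x. \<bar>x\<bar> \<ge> R \<longrightarrow> - sgn x * deriv V x \<le> - \<beta> * \<bar>x\<bar>"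
  shows "\<exists>c. \<forall>x. c \<le> V x"
proof -
  obtain \<beta> R where b: "\<beta> > 0" and R: "R \<ge> 1" and h: "\<forall>x. \<bar>x\<bar> \<ge> R \<longrightarrow> - sgn x * deriv V x \<le> - \<beta> * \<bar>x\<bar>"
    using conf by blast
  have D: "DERIV V x :> deriv V x" for x using d by (simp add: DERIV_deriv_iff_real_differentiable)
  have cont: "continuous_on UNIV V"
    using d by (intro differentiable_imp_continuous_on differentiable_at_imp_differentiable_on) auto
  have cR: "continuous_on {-R..R} V" using cont continuous_on_subset by blast
  obtain x0 where x0: "x0 \<in> {-R..R}" "\<forall>y\<in>{-R..R}. V x0 \<le> V y"
    using continuous_attains_inf[OF compact_Icc _ cR] R by auto
  have "V x0 \<le> V x" for x
  proof -
    consider "x \<in> {-R..R}" | "x > R" | "x < -R" by force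
    then show ?thesis
    proof cases
      case 1 then show ?thesis using x0 by blast
    next
      case 2
      obtain z where z: "R < z" "z < x" "V x - V R = (x - R) * deriv V z"
        using MVT2[OF 2, of V "deriv V"] D by blast
      have "R \<le> \<bar>z\<bar>" using z R by linarith
      then have "- sgn z * deriv V z \<le> - \<beta> * \<bar>z\<bar>" using h by blast
      moreover have "sgn z = 1" "\<bar>z\<bar> = z" using z R by auto
      ultimately have "- deriv V z \<le> - \<beta> * z" by simp
      moreover have "\<beta> * z > 0" using b z R by simp
      ultimately have "deriv V z \<ge> 0" by linarith
      then have "(x - R) * deriv V z \<ge> 0" using z by simp
      then have "V R \<le> V x" using z by linarith
      moreover have "V x0 \<le> V R" using x0 R by auto
      ultimately show ?thesis by linarith
    next
      case 3
      obtain z where z: "x < z" "z < -R" "V (-R) - V x = (-R - x) * deriv V z"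
        using MVT2[OF 3, of V "deriv V"] D by blast
      have "R \<le> \<bar>z\<bar>" using z R by linarith
      then have "- sgn z * deriv V z \<le> - \<beta> * \<bar>z\<bar>" using h by blast
      moreover have "sgn z = -1" "\<bar>z\<bar> = -z" using z R by auto
      ultimately have "deriv V z \<le> \<beta> * z" by simp
      moreover have "\<beta> * z < 0" using b z R by (simp add: mult_pos_neg)
      ultimately have "deriv V z \<le> 0" by linarith
      then have "(-R - x) * deriv V z \<le> 0" using z by (simp add: mult_nonneg_nonpos)
      then have "V (-R) \<le> V x" using z by linarith
      moreover have "V x0 \<le> V (-R)" using x0 R by auto
      ultimately show ?thesis by linarith
    qed
  qed
  then show ?thesis by blast
qed

lemma main_eps:
  fixes \<sigma> \<epsilon> :: real and V p :: "real \<Rightarrow> real"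
  assumes sigma_pos: "\<sigma> > 0" and eps: "0 < \<epsilon>"
    and Vd: "\<forall>x. V differentiable at x" and pd: "\<forall>x. p differentiable at x"
    and cV: "\<forall>x. cV \<le> V x" and P0: "\<forall>x. \<bar>p x\<bar> \<le> P0"
  shows "\<forall>y. feps \<sigma> V p \<epsilon> (geps \<sigma> V p \<epsilon> y) = y"
    and "\<forall>y. meps \<sigma> V p \<epsilon> y > 0"
    and "\<forall>x y. (LBINT z=ereal x..ereal y. meps \<sigma> V p \<epsilon> z)
            = geps \<sigma> V p \<epsilon> y / sqrt (2 * \<sigma>\<^sup>2) - geps \<sigma> V p \<epsilon> x / sqrt (2 * \<sigma>\<^sup>2)"
proof -
  define k where "k z = exp ((V z + p (z / \<epsilon>)) / \<sigma>\<^sup>2)" for z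
  define F where "F = feps \<sigma> V p \<epsilon>"
  define G where "G = geps \<sigma> V p \<epsilon>"
  define s where "s = sqrt (2 * \<sigma>\<^sup>2)"
  have s_pos: "s > 0" using sigma_pos by (simp add: s_def)
  have contV: "continuous_on UNIV V"
    using Vd by (intro differentiable_imp_continuous_on differentiable_at_imp_differentiable_on) auto
  have contp: "continuous_on UNIV p"
    using pd by (intro differentiable_imp_continuous_on differentiable_at_imp_differentiable_on) auto
  have contp2: "continuous_on UNIV (\<lambda>z. p (z / \<epsilon>))"
    by (rule continuous_on_compose2[OF contp]) (use eps in \<open>auto intro!: continuous_intros\<close>)
  have contk: "continuous_on UNIV k"
    unfolding k_def using sigma_pos by (intro continuous_intros contV contp2) auto
  have F_eq: "F = (\<lambda>x. LBINT z=ereal 0..ereal x. k z)"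
    by (simp add: F_def fun_eq_iff feps_def k_def)
  have DF: "(F has_field_derivative k x) (at x)" for x
    unfolding F_eq by (rule FTC_at[OF contk])
  have dF: "deriv F x = k x" for x using DF by (rule DERIV_imp_deriv)
  define c0 where "c0 = exp ((cV - P0) / \<sigma>\<^sup>2)"
  have c0: "c0 > 0" by (simp add: c0_def)
  have klow: "c0 \<le> k z" for z
  proof -
    have "cV - P0 \<le> V z + p (z / \<epsilon>)" using cV[rule_format, of z] P0[rule_format, of "z / \<epsilon>"] by (auto simp: abs_le_iff)
    then have "(cV - P0) / \<sigma>\<^sup>2 \<le> (V z + p (z / \<epsilon>)) / \<sigma>\<^sup>2"
      using sigma_pos by (simp add: divide_right_mono)
    then show ?thesis by (simp add: c0_def k_def)
  qed
  have Fmvt: "F b - F a \<ge> (b - a) * c0" if ab: "a < b" for a b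
  proof -
    obtain z where z: "a < z" "z < b" "F b - F a = (b - a) * k z"
      using MVT2[OF ab, of F k] DF by blast
    show ?thesis using z klow[of z] ab by (simp add: mult_left_mono)
  qed
  have Fstrict: "F a < F b" if "a < b" for a b
  proof -
    have "(b - a) * c0 > 0" using that c0 by simp
    then show ?thesis using Fmvt[OF that] by linarith
  qed
  have injF: "inj F"
  proof (rule injI)
    fix a b assume "F a = F b"
    then show "a = b" using Fstrict[of a b] Fstrict[of b a] by (cases a b rule: linorder_cases) auto
  qed
  have contF: "isCont F x" for x using DF by (rule DERIV_isCont)
  have F0: "F 0 = 0" by (simp add: F_eq)
  have surjF: "surj F"
  proof -
    have "y \<in> range F" for y
    proof -
      define b where "b = \<bar>y\<bar> / c0 + 1"
      have b: "b > 0" using c0 by (simp add: b_def add_nonneg_pos)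
      have "b * c0 = \<bar>y\<bar> + c0" using c0 by (simp add: b_def field_simps)
      then have bc: "b * c0 \<ge> \<bar>y\<bar>" using c0 by simp
      have "F b \<ge> b * c0" using Fmvt[of 0 b] b F0 by simp
      then have 1: "y \<le> F b" using bc by linarith
      have "F 0 - F (-b) \<ge> b * c0" using Fmvt[of "-b" 0] b by simp
      then have 2: "F (-b) \<le> y" using bc F0 by linarith
      obtain x where "F x = y" using IVT[of F "-b" y b] 1 2 b contF by auto
      then show ?thesis by auto
    qed
    then show ?thesis by auto
  qed
  have G_eq: "G = inv F" by (simp add: G_def F_def geps_def)
  have FG: "F (G y) = y" for y unfolding G_eq using surjF by (rule surj_f_inv_f)
  have GF: "G (F z) = z" for z unfolding G_eq using injF by (rule inv_f_f)
  have contG: "isCont G y" for y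
  proof -
    have "isCont G (F (G y))"
      by (rule isCont_inverse_function[where d=1]) (auto simp: GF contF)
    then show ?thesis by (simp add: FG)
  qed
  have kpos: "k z > 0" for z by (simp add: k_def)
  have DG: "(G has_field_derivative inverse (k (G y))) (at y)" for y
    by (rule DERIV_inverse_function[where f=F and g=G and x=y and D="k (G y)" and a="y - 1" and b="y + 1"])
       (auto simp: DF FG contG kpos[THEN less_imp_neq, symmetric] kpos)
  have meq: "meps \<sigma> V p \<epsilon> y = 1 / (s * k (G y))" for y
    by (simp add: meps_def s_def dF[unfolded F_def] G_def)
  show "\<forall>y. feps \<sigma> V p \<epsilon> (geps \<sigma> V p \<epsilon> y) = y" using FG by (simp add: F_def G_def)
  show "\<forall>y. meps \<sigma> V p \<epsilon> y > 0" using meq s_pos kpos by simp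
  have DGs: "((\<lambda>y. G y / s) has_field_derivative meps \<sigma> V p \<epsilon> y) (at y)" for y
  proof -
    have "((\<lambda>y. G y / s) has_field_derivative inverse (k (G y)) / s) (at y)"
      using DERIV_cdivide[OF DG, of s] by simp
    then show ?thesis by (simp add: meq field_simps)
  qed
  have contGon: "continuous_on UNIV G" using contG by (simp add: continuous_at_imp_continuous_on)
  have contm: "continuous_on UNIV (meps \<sigma> V p \<epsilon>)"
  proof -
    have "continuous_on UNIV (\<lambda>y. k (G y))"
      by (rule continuous_on_compose2[OF contk contGon]) auto
    then have "continuous_on UNIV (\<lambda>y. 1 / (s * k (G y)))"
      using s_pos kpos[THEN less_imp_neq, THEN not_sym] by (intro continuous_intros) auto
    moreover have "meps \<sigma> V p \<epsilon> = (\<lambda>y. 1 / (s * k (G y)))" by (rule ext) (rule meq)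
    ultimately show ?thesis by simp
  qed
  show "\<forall>x y. (LBINT z=ereal x..ereal y. meps \<sigma> V p \<epsilon> z)
            = geps \<sigma> V p \<epsilon> y / sqrt (2 * \<sigma>\<^sup>2) - geps \<sigma> V p \<epsilon> x / sqrt (2 * \<sigma>\<^sup>2)"
  proof (intro allI)
    fix x y
    have "(LBINT z=x..y. meps \<sigma> V p \<epsilon> z) = G y / s - G x / s"
      by (rule interval_integral_FTC_finite)
         (auto intro: continuous_on_subset[OF contm] has_field_derivative_at_within[OF DGs]
               simp: has_real_derivative_iff_has_vector_derivative[symmetric])
    then show "(LBINT z=ereal x..ereal y. meps \<sigma> V p \<epsilon> z)
            = geps \<sigma> V p \<epsilon> y / sqrt (2 * \<sigma>\<^sup>2) - geps \<sigma> V p \<epsilon> x / sqrt (2 * \<sigma>\<^sup>2)"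
      by (simp add: G_def s_def)
  qed
qed

lemma Beps_bound:
  fixes V p :: "real \<Rightarrow> real" and \<epsilon> CV P2 :: real
  assumes Vd2: "\<forall>x. deriv V differentiable at x" and pd2: "\<forall>x. deriv p differentiable at x"
    and V2: "\<forall>x. \<bar>deriv (deriv V) x\<bar> \<le> CV" and P2: "\<forall>x. \<bar>deriv (deriv p) x\<bar> \<le> P2"
    and eps: "\<epsilon> > 0"
  shows "Beps V p \<epsilon> w \<le> (CV + P2 / \<epsilon>\<^sup>2) / 2"
proof -
  have D1: "(deriv V has_field_derivative deriv (deriv V) w) (at w)"
    using Vd2 by (simp add: DERIV_deriv_iff_real_differentiable)
  have D2: "(deriv p has_field_derivative deriv (deriv p) (w / \<epsilon>)) (at (w / \<epsilon>))"
    using pd2 by (simp add: DERIV_deriv_iff_real_differentiable)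
  have Did: "((\<lambda>x. x / \<epsilon>) has_field_derivative 1 / \<epsilon>) (at w)"
    using DERIV_cdivide[OF DERIV_ident, of \<epsilon>] by simp
  have D3: "((\<lambda>x. deriv p (x / \<epsilon>)) has_field_derivative deriv (deriv p) (w / \<epsilon>) * (1 / \<epsilon>)) (at w)"
    by (rule DERIV_chain2[OF D2 Did])
  have beq: "beps V p \<epsilon> = (\<lambda>x. - deriv V x - (1 / \<epsilon>) * deriv p (x / \<epsilon>))"
    by (rule ext) (simp add: beps_def)
  have Db: "(beps V p \<epsilon> has_field_derivative
      (- deriv (deriv V) w - (1 / \<epsilon>) * (deriv (deriv p) (w / \<epsilon>) * (1 / \<epsilon>)))) (at w)"
    unfolding beq by (intro DERIV_diff DERIV_minus DERIV_cmult D1 D3)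
  define D where "D = - deriv (deriv V) w - (1 / \<epsilon>) * (deriv (deriv p) (w / \<epsilon>) * (1 / \<epsilon>))"
  have dD: "deriv (beps V p \<epsilon>) w = D" unfolding D_def using Db by (rule DERIV_imp_deriv)
  have e2: "(1 / \<epsilon>) * (deriv (deriv p) (w / \<epsilon>) * (1 / \<epsilon>)) = deriv (deriv p) (w / \<epsilon>) / \<epsilon>\<^sup>2"
    by (simp add: power2_eq_square)
  have "\<bar>deriv (deriv p) (w / \<epsilon>) / \<epsilon>\<^sup>2\<bar> \<le> P2 / \<epsilon>\<^sup>2"
    using P2 eps by (simp add: abs_divide divide_right_mono)
  then have "\<bar>D\<bar> \<le> CV + P2 / \<epsilon>\<^sup>2"
    unfolding D_def e2 using V2[rule_format, of w] by linarith
  moreover have "Beps V p \<epsilon> w = - (1/2) * (beps V p \<epsilon> w)\<^sup>2 - (1/2) * D"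
    by (simp add: Beps_def dD)
  moreover have "(beps V p \<epsilon> w)\<^sup>2 \<ge> 0" by simp
  moreover have "- D \<le> \<bar>D\<bar>" by simp
  ultimately have "2 * Beps V p \<epsilon> w \<le> CV + P2 / \<epsilon>\<^sup>2" by linarith
  then show ?thesis by simp
qed

theorem lemma4p20:
  fixes L \<sigma> :: real and V p :: "real \<Rightarrow> real"
    and M :: "'a measure" and N :: "real \<Rightarrow> real \<Rightarrow> real \<Rightarrow> real \<Rightarrow> 'a \<Rightarrow> real"
  assumes L_pos: "L > 0" and sigma_pos: "\<sigma> > 0"
    and V_C2: "\<forall>x. V differentiable at x" "\<forall>x. deriv V differentiable at x"
              "continuous_on UNIV (deriv (deriv V))"
    and p_C2: "\<forall>x. p differentiable at x" "\<forall>x. deriv p differentiable at x"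
              "continuous_on UNIV (deriv (deriv p))"
    and V0: "V 0 = 0" and p0: "p 0 = 0"
    and p_periodic: "\<forall>x. p (x + L) = p x"
    and V'_lipschitz: "\<exists>C. C-lipschitz_on UNIV (deriv V)"
    and V_confining: "\<exists>\<beta>>0. \<exists>R\<ge>1. \<forall>x. \<bar>x\<bar> \<ge> R \<longrightarrow> - sgn x * deriv V x \<le> - \<beta> * \<bar>x\<bar>"
    and M_prob: "prob_space M"
    and N_meas: "\<forall>h>0. \<forall>a b. (\<lambda>(u, \<omega>). N h a b u \<omega>) \<in> borel_measurable (lborel \<Otimes>\<^sub>M M)"
    and N_law: "\<forall>h>0. \<forall>a b. \<forall>u\<in>{0<..<1}.
                  distributed M lborel (N h a b u) (normal_density (a + u * (b - a)) (sqrt (h * u * (1 - u))))"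
  shows "\<exists>K1>0. \<exists>K2>0. \<exists>\<epsilon>0>0. \<forall>\<epsilon>. 0 < \<epsilon> \<and> \<epsilon> < \<epsilon>0 \<and> K1 * \<epsilon>^4 < min 2 (1 / (8 * \<sigma>\<^sup>2)) \<longrightarrow>
     (\<forall>x y. peps \<sigma> V p \<epsilon> M N (\<epsilon>\<^sup>2) x y
        \<le> exp (K2 / 2) * sqrt (2 / (2 - K1 * \<epsilon>^4))
          * exp (2 * K1 * \<epsilon>\<^sup>2 * (geps \<sigma> V p \<epsilon> x)\<^sup>2)
          * (meps \<sigma> V p \<epsilon> y powr (3/2) / meps \<sigma> V p \<epsilon> x powr (1/2))
          * (1 / sqrt (2 * pi * \<epsilon>\<^sup>2))
          * exp (- ((1 - 8 * K1 * \<sigma>\<^sup>2 * \<epsilon>^4) / (4 * \<sigma>\<^sup>2 * \<epsilon>\<^sup>2))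
                 * (geps \<sigma> V p \<epsilon> y - geps \<sigma> V p \<epsilon> x)\<^sup>2))"
proof -
  obtain C where CV: "C-lipschitz_on UNIV (deriv V)" using V'_lipschitz by blast
  have C0: "0 \<le> C" using CV by (rule lipschitz_on_nonneg)
  have V2: "\<forall>x. \<bar>deriv (deriv V) x\<bar> \<le> C"
  proof
    fix x
    have "(deriv V has_field_derivative deriv (deriv V) x) (at x)"
      using V_C2(2) by (simp add: DERIV_deriv_iff_real_differentiable)
    then show "\<bar>deriv (deriv V) x\<bar> \<le> C" by (rule lipschitz_deriv_bound[OF CV])
  qed
  have contp: "continuous_on UNIV p"
    using p_C2(1) by (intro differentiable_imp_continuous_on differentiable_at_imp_differentiable_on) auto
  have dp_per: "\<forall>x. deriv p (x + L) = deriv p x" by (rule deriv_periodic[OF p_C2(1) p_periodic])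
  have ddp_per: "\<forall>x. deriv (deriv p) (x + L) = deriv (deriv p) x" by (rule deriv_periodic[OF p_C2(2) dp_per])
  obtain P2 where P2: "\<forall>x. \<bar>deriv (deriv p) x\<bar> \<le> P2"
    using periodic_bounded[OF L_pos p_C2(3) ddp_per] by blast
  have P2nn: "0 \<le> P2" using P2[rule_format, of 0] by linarith
  obtain P0 where P0: "\<forall>x. \<bar>p x\<bar> \<le> P0" using periodic_bounded[OF L_pos contp p_periodic] by blast
  obtain cV where cV: "\<forall>x. cV \<le> V x" using V_lower[OF V_C2(1) V_confining] by blast
  define K2 where "K2 = C + P2 + 1"
  have K2pos: "K2 > 0" using C0 P2nn by (simp add: K2_def)
  have main: "peps \<sigma> V p \<epsilon> M N (\<epsilon>\<^sup>2) x y
        \<le> exp (K2 / 2) * sqrt (2 / (2 - 1 * \<epsilon>^4))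
          * exp (2 * 1 * \<epsilon>\<^sup>2 * (geps \<sigma> V p \<epsilon> x)\<^sup>2)
          * (meps \<sigma> V p \<epsilon> y powr (3/2) / meps \<sigma> V p \<epsilon> x powr (1/2))
          * (1 / sqrt (2 * pi * \<epsilon>\<^sup>2))
          * exp (- ((1 - 8 * 1 * \<sigma>\<^sup>2 * \<epsilon>^4) / (4 * \<sigma>\<^sup>2 * \<epsilon>\<^sup>2))
                 * (geps \<sigma> V p \<epsilon> y - geps \<sigma> V p \<epsilon> x)\<^sup>2)"
    if eps: "0 < \<epsilon>" "\<epsilon> < 1" "1 * \<epsilon>^4 < min 2 (1 / (8 * \<sigma>\<^sup>2))" for \<epsilon> x y
  proof -
    note ME = main_eps[OF sigma_pos eps(1) V_C2(1) p_C2(1) cV P0]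
    define m where "m = meps \<sigma> V p \<epsilon>"
    define g where "g = geps \<sigma> V p \<epsilon>"
    define s where "s = sqrt (2 * \<sigma>\<^sup>2)"
    have mpos: "m z > 0" for z using ME(2) by (simp add: m_def)
    have Iint: "(LBINT z=ereal x..ereal y. m z) = g y / s - g x / s"
      using ME(3) by (simp add: m_def g_def s_def)
    define bnd where "bnd = (C + P2 / \<epsilon>\<^sup>2) / 2"
    have bnd0: "0 \<le> bnd" using C0 P2nn by (simp add: bnd_def)
    have Bb: "Beps V p \<epsilon> w \<le> bnd" for w
      unfolding bnd_def by (rule Beps_bound[OF V_C2(2) p_C2(2) V2 P2 eps(1)])
    have hb: "\<epsilon>\<^sup>2 * bnd \<le> K2 / 2"
    proof -
      have "\<epsilon>\<^sup>2 * bnd = (\<epsilon>\<^sup>2 * C + P2) / 2" using eps by (simp add: bnd_def field_simps)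
      moreover have "\<epsilon>\<^sup>2 * C \<le> C"
        using eps C0 by (simp add: mult_left_le_one_le power_le_one)
      ultimately show ?thesis by (simp add: K2_def)
    qed
    define E where "E = (\<integral>\<omega>. exp (\<epsilon>\<^sup>2 * (LBINT u=ereal 0..ereal 1.
            Beps V p \<epsilon> (N (\<epsilon>\<^sup>2) (g x) (g y) u \<omega>))) \<partial>M)"
    have Eb: "E \<le> exp (K2 / 2)"
      unfolding E_def
    proof (rule expect_le[OF M_prob])
      fix \<omega>
      have "(LBINT u=ereal 0..ereal 1. Beps V p \<epsilon> (N (\<epsilon>\<^sup>2) (g x) (g y) u \<omega>)) \<le> bnd"
        by (rule LBINT01_le[OF Bb bnd0])
      then have "\<epsilon>\<^sup>2 * (LBINT u=ereal 0..ereal 1. Beps V p \<epsilon> (N (\<epsilon>\<^sup>2) (g x) (g y) u \<omega>)) \<le> K2 / 2"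
        using mult_left_mono[OF _ zero_le_power2[of \<epsilon>]] hb by (meson order_trans)
      then show "exp (\<epsilon>\<^sup>2 * (LBINT u=ereal 0..ereal 1. Beps V p \<epsilon> (N (\<epsilon>\<^sup>2) (g x) (g y) u \<omega>))) \<le> exp (K2 / 2)"
        by simp
    qed simp
    define Q where "Q = (g y - g x)\<^sup>2"
    have s2: "s\<^sup>2 = 2 * \<sigma>\<^sup>2" by (simp add: s_def)
    have spos: "s > 0" using sigma_pos by (simp add: s_def)
    have I2: "(g y / s - g x / s)\<^sup>2 = Q / (2 * \<sigma>\<^sup>2)"
      unfolding Q_def using spos s2 by (simp add: power_divide diff_divide_distrib[symmetric])
    have ex1: "exp (- (1 / (2 * \<epsilon>\<^sup>2)) * (LBINT z=ereal x..ereal y. m z)\<^sup>2)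
             = exp (- (1 / (4 * \<sigma>\<^sup>2 * \<epsilon>\<^sup>2)) * Q)"
      unfolding Iint I2 by (simp add: field_simps)
    define X2 where "X2 = exp (- ((1 - 8 * 1 * \<sigma>\<^sup>2 * \<epsilon>^4) / (4 * \<sigma>\<^sup>2 * \<epsilon>\<^sup>2)) * Q)"
    have ex2: "exp (- (1 / (4 * \<sigma>\<^sup>2 * \<epsilon>\<^sup>2)) * Q) \<le> X2"
    proof -
      have Q0: "Q \<ge> 0" by (simp add: Q_def)
      have "(1 - 8 * 1 * \<sigma>\<^sup>2 * \<epsilon>^4) / (4 * \<sigma>\<^sup>2 * \<epsilon>\<^sup>2) \<le> 1 / (4 * \<sigma>\<^sup>2 * \<epsilon>\<^sup>2)"
        using sigma_pos eps by (intro divide_right_mono) auto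
      then have "((1 - 8 * 1 * \<sigma>\<^sup>2 * \<epsilon>^4) / (4 * \<sigma>\<^sup>2 * \<epsilon>\<^sup>2)) * Q \<le> (1 / (4 * \<sigma>\<^sup>2 * \<epsilon>\<^sup>2)) * Q"
        using Q0 by (rule mult_right_mono)
      then have "- (1 / (4 * \<sigma>\<^sup>2 * \<epsilon>\<^sup>2)) * Q \<le> - ((1 - 8 * 1 * \<sigma>\<^sup>2 * \<epsilon>^4) / (4 * \<sigma>\<^sup>2 * \<epsilon>\<^sup>2)) * Q"
        by linarith
      then show ?thesis unfolding X2_def by simp
    qed
    define A where "A = m y / sqrt (2 * pi * \<epsilon>\<^sup>2) * sqrt (m y / m x)"
    have A0: "A \<ge> 0" using mpos[of x] mpos[of y] unfolding A_def
      by (intro mult_nonneg_nonneg divide_nonneg_nonneg) auto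
    have lhs: "peps \<sigma> V p \<epsilon> M N (\<epsilon>\<^sup>2) x y = A * exp (- (1 / (4 * \<sigma>\<^sup>2 * \<epsilon>\<^sup>2)) * Q) * E"
      unfolding ex1[symmetric] by (simp add: peps_def A_def E_def m_def g_def)
    have step1: "peps \<sigma> V p \<epsilon> M N (\<epsilon>\<^sup>2) x y \<le> A * X2 * exp (K2 / 2)"
    proof -
      have E0: "E \<ge> 0" unfolding E_def by (rule Bochner_Integration.integral_nonneg) simp
      have X20: "X2 \<ge> 0" by (simp add: X2_def)
      have "A * exp (- (1 / (4 * \<sigma>\<^sup>2 * \<epsilon>\<^sup>2)) * Q) \<le> A * X2"
        by (rule mult_left_mono[OF ex2 A0])
      then have "A * exp (- (1 / (4 * \<sigma>\<^sup>2 * \<epsilon>\<^sup>2)) * Q) * E \<le> A * X2 * E"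
        using E0 by (rule mult_right_mono)
      also have "\<dots> \<le> A * X2 * exp (K2 / 2)"
        using Eb A0 X20 by (intro mult_left_mono) auto
      finally show ?thesis unfolding lhs .
    qed
    have Aeq: "A = (m y powr (3/2) / m x powr (1/2)) * (1 / sqrt (2 * pi * \<epsilon>\<^sup>2))"
    proof -
      have "m y powr (3/2) = m y * sqrt (m y)"
      proof -
        have "m y powr (3/2) = m y powr (1 + 1/2)" by simp
        also have "\<dots> = m y powr 1 * m y powr (1/2)" by (rule powr_add)
        also have "\<dots> = m y * sqrt (m y)" using mpos[of y] by (simp add: powr_half_sqrt)
        finally show ?thesis .
      qed
      moreover have "m x powr (1/2) = sqrt (m x)" using mpos[of x] by (simp add: powr_half_sqrt)
      ultimately show ?thesis by (simp add: A_def real_sqrt_divide)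
    qed
    define S where "S = sqrt (2 / (2 - 1 * \<epsilon>^4))"
    define X1 where "X1 = exp (2 * 1 * \<epsilon>\<^sup>2 * (g x)\<^sup>2)"
    have S1: "S \<ge> 1"
    proof -
      have "\<epsilon>^4 > 0" using eps by simp
      moreover have "\<epsilon>^4 < 2" using eps(3) by simp
      ultimately have "1 \<le> 2 / (2 - 1 * \<epsilon>^4)" by (simp add: field_simps)
      then show ?thesis unfolding S_def by simp
    qed
    have X11: "X1 \<ge> 1" unfolding X1_def by simp
    have P0': "A * X2 * exp (K2 / 2) \<ge> 0" using A0 by (simp add: X2_def)
    have "A * X2 * exp (K2 / 2) \<le> (S * X1) * (A * X2 * exp (K2 / 2))"
    proof -
      have "S * X1 \<ge> 1" using S1 X11 by (metis mult_mono one_le_mult_iff order_trans less_eq_real_def zero_le_one mult_1_left)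
      then show ?thesis using P0' by (metis mult_right_mono mult_1_left)
    qed
    also have "\<dots> = exp (K2 / 2) * S * X1
          * (m y powr (3/2) / m x powr (1/2)) * (1 / sqrt (2 * pi * \<epsilon>\<^sup>2)) * X2"
      unfolding Aeq by (simp add: ac_simps)
    finally have "A * X2 * exp (K2 / 2) \<le> exp (K2 / 2) * S * X1
          * (m y powr (3/2) / m x powr (1/2)) * (1 / sqrt (2 * pi * \<epsilon>\<^sup>2)) * X2" .
    with step1 show ?thesis
      unfolding S_def X1_def X2_def Q_def m_def g_def by linarith
  qed
  show ?thesis
  proof (rule exI[of _ 1], intro conjI)
    show "(0::real) < 1" by simp
    show "\<exists>K2>0. \<exists>\<epsilon>0>0. \<forall>\<epsilon>. 0 < \<epsilon> \<and> \<epsilon> < \<epsilon>0 \<and> 1 * \<epsilon>^4 < min 2 (1 / (8 * \<sigma>\<^sup>2)) \<longrightarrow>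
     (\<forall>x y. peps \<sigma> V p \<epsilon> M N (\<epsilon>\<^sup>2) x y
        \<le> exp (K2 / 2) * sqrt (2 / (2 - 1 * \<epsilon>^4))
          * exp (2 * 1 * \<epsilon>\<^sup>2 * (geps \<sigma> V p \<epsilon> x)\<^sup>2)
          * (meps \<sigma> V p \<epsilon> y powr (3/2) / meps \<sigma> V p \<epsilon> x powr (1/2))
          * (1 / sqrt (2 * pi * \<epsilon>\<^sup>2))
          * exp (- ((1 - 8 * 1 * \<sigma>\<^sup>2 * \<epsilon>^4) / (4 * \<sigma>\<^sup>2 * \<epsilon>\<^sup>2))
                 * (geps \<sigma> V p \<epsilon> y - geps \<sigma> V p \<epsilon> x)\<^sup>2))"
      using K2pos main by (intro exI[of _ K2] conjI exI[of _ "1::real"] allI impI) auto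
  qed
qed

end
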